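(* Let $M$ be a total dtpla with look-ahead states $P=\{\hat p_1,\dots,\hat p_n\}$. Then $$\sup\{\mathrm{height}(t)\mid t\in\mathrm{diff}(M)\}=\sup\{\mathrm{height}(M(C[p])/v)\mid C\in\mathcal C_\Sigma,\ p\in P,\ v\in V_\bot(\mathrm{pref}(M,C))\},$$ where suprema are taken in $\mathbb N\cup\{\infty\}$ and the supremum of the empty set is $0$. In particular, $\mathrm{diff}(M)$ is finite if and only if $\mathrm{diftup}(M)$ is finite, and then $\mathrm{maxdiff}(M)$ equals the maximal height of a component of a difference tuple of $M$.
   Context: Trees and patterns. For a ranked alphabet $\Delta$ and a set $Z$ of extra nullary symbols, $T_\Delta(Z)$ is the set of finite trees over $\Delta\cup Z$, and $T_\Delta=T_\Delta(\emptyset)$. Nodes are addresses in $\mathbb N_+^*$; $t/v$ denotes the subtree of $t$ at node $v$. The symbol $\bot$ is a special nullary symbol; $\mathcal P_\Delta=T_\Delta(\{\bot\})$ is the set of $\Delta$-patterns; $V_\bot(t)$ is the set of nodes of $t$ labelled $\bot$. For trees $t,t'$, $t\sqsubseteq t'$ means that $t'$ is obtained from $t$ by replacing some occurrences of $\bot$ by trees. For a finite nonempty set $T$ of trees, $\sqcap T$ is the greatest lower bound of $T$ w.r.t. $\sqsubseteq$ (largest common prefix): a node $v$ belongs to $\sqcap T$ iff $v$ is a node of all trees in $T$ and every proper ancestor of $v$ has the same label in all trees of $T$; its label is that common label if $v$ has the same label in all trees of $T$, and $\bot$ otherwise. A $\Sigma$-context is a tree $C\in T_\Sigma(\{\bot\})$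 with exactly one occurrence of $\bot$; $\mathcal C_\Sigma$ is the set of $\Sigma$-contexts, and $C[t]$ is the result of replacing $\bot$ in $C$ by $t$. Dtlas. A deterministic top-down tree transducer with look-ahead (dtla) $M$ from $\Sigma$ to $\Delta$ consists of a finite set $Q$ of states, a total deterministic bottom-up tree automaton with finite state set $P$ (look-ahead states) and transitions $\delta(a,p_1,\dots,p_k)\in P$ for $a\in\Sigma^{(k)}$, extended to $\delta_M:T_\Sigma\to P$ (write $[\![p]\!]_M=\{s\mid\delta_M(s)=p\}$), an axiom $A_M(p)\in T_\Delta(Q(\{x_0\}))$ for each $p\in P$, and for $q\in Q$, $a\in\Sigma^{(k)}$, $p_1,\dots,p_k\in P$ at most one rule $q(a(x_1\langle p_1\rangle,\dots,x_k\langle p_k\rangle))\to\zeta$ with $\zeta=\mathrm{rhs}_M(q,a,p_1,\dots,p_k)\in T_\Delta(Q(X_k))$, $X_k=\{x_1,\dots,x_k\}$. Semantics: $q_M(a(s_1,\dots,s_k))=\mathrm{rhs}_M(q,a,\delta_M(s_1),\dots,\delta_M(s_k))[q'(x_i)\leftarrow q'_M(s_i)\mid q'\in Q,i\in[k]]$ (a partial function $[\![q]\!]_M$), and $M(s)=A_M(\delta_M(s))[q(x_0)\leftarrow q_M(s)\mid q\in Q]$, defining $[\![M]\!]$. $M$ is total if $[\![M]\!]$ is total. A dtpla is a dtla with $|P|\ge2$. For $C\in\mathcal C_\Sigma$ and $p\in P$, $M(C[p])\in T_\Delta(Q\times P)$ is the output of $M$ on $C$ when the hole is treated as a leaf with look-ahead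 state $p$ that is not translated further: formally $p$ is an extra nullary input symbol with $\delta(p)=p$ and $q_M(p)=\langle q,p\rangle$ for all $q\in Q$. Difference trees and tuples. $\mathrm{diff}(M)=\{M(C[p])/v\mid C\in\mathcal C_\Sigma,\ p,p'\in P,\ v\in V_\bot(M(C[p])\sqcap M(C[p']))\}$, and $\mathrm{maxdiff}(M)$ is the maximal height of its elements (when finite). For a fixed enumeration $P=\{\hat p_1,\dots,\hat p_n\}$ and $C\in\mathcal C_\Sigma$, $\mathrm{pref}(M,C)=\sqcap\{M(C[\hat p_1]),\dots,M(C[\hat p_n])\}$, and the set of difference tuples is $\mathrm{diftup}(M)=\{(M(C[\hat p_1])/v,\dots,M(C[\hat p_n])/v)\mid C\in\mathcal C_\Sigma,\ v\in V_\bot(\mathrm{pref}(M,C))\}$. *)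

theory Defs
  imports Main "HOL-Library.Extended_Nat"
begin

datatype 'a tree = Nd 'a "'a tree list"

text \<open>Nodes are addresses (lists of child indices, 0-based here).\<close>
fun is_pos :: "'a tree \<Rightarrow> nat list \<Rightarrow> bool" where
  "is_pos (Nd a ts) [] = True"
| "is_pos (Nd a ts) (i # v) = (i < length ts \<and> is_pos (ts ! i) v)"

fun subt :: "'a tree \<Rightarrow> nat list \<Rightarrow> 'a tree" where
  "subt t [] = t"
| "subt (Nd a ts) (i # v) = subt (ts ! i) v"

fun root :: "'a tree \<Rightarrow> 'a" where
  "root (Nd a ts) = a"

definition lab :: "'a tree \<Rightarrow> nat list \<Rightarrow> 'a" where
  "lab t v = root (subt t v)"

fun height :: "'a tree \<Rightarrow> nat" where
  "height (Nd a ts) = Max (insert 0 (Suc ` set (map height ts)))"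

text \<open>Input symbols, possibly a look-ahead state as an extra nullary symbol (for C[p]).\<close>
datatype ('s, 'p) ilab = ISym 's | ILa 'p

text \<open>Right-hand sides: output symbols or calls q(x_i).\<close>
datatype ('d, 'q) rlab = RSym 'd | RCall 'q nat

text \<open>Output patterns: output symbols, pairs <q,p>, or bottom.\<close>
datatype ('d, 'q, 'p) olab = OSym 'd | OSt 'q 'p | OBot

record ('s, 'd, 'q, 'p) dtla =
  Sig :: "'s set"
  rkS :: "'s \<Rightarrow> nat"
  Del :: "'d set"
  rkD :: "'d \<Rightarrow> nat"
  Qs  :: "'q set"
  Ps  :: "'p set"
  dl  :: "'s \<Rightarrow> 'p list \<Rightarrow> 'p"
  ax  :: "'p \<Rightarrow> ('d, 'q) rlab tree"
  rl  :: "'q \<Rightarrow> 's \<Rightarrow> 'p list \<Rightarrow> ('d, 'q) rlab tree option"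

fun wf_rhs :: "('s, 'd, 'q, 'p) dtla \<Rightarrow> (nat \<Rightarrow> bool) \<Rightarrow> ('d, 'q) rlab tree \<Rightarrow> bool" where
  "wf_rhs M ok (Nd (RSym d) ts) = (d \<in> Del M \<and> length ts = rkD M d \<and> (\<forall>t\<in>set ts. wf_rhs M ok t))"
| "wf_rhs M ok (Nd (RCall q i) ts) = (ts = [] \<and> q \<in> Qs M \<and> ok i)"

definition wf_dtla :: "('s, 'd, 'q, 'p) dtla \<Rightarrow> bool" where
  "wf_dtla M \<longleftrightarrow>
     finite (Sig M) \<and> finite (Del M) \<and> finite (Qs M) \<and> finite (Ps M) \<and>
     (\<forall>a\<in>Sig M. \<forall>ps. length ps = rkS M a \<and> set ps \<subseteq> Ps M \<longrightarrow> dl M a ps \<in> Ps M) \<and>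
     (\<forall>p\<in>Ps M. wf_rhs M (\<lambda>i. i = 0) (ax M p)) \<and>
     (\<forall>q\<in>Qs M. \<forall>a\<in>Sig M. \<forall>ps \<zeta>. length ps = rkS M a \<and> set ps \<subseteq> Ps M \<and> rl M q a ps = Some \<zeta>
         \<longrightarrow> wf_rhs M (\<lambda>i. 1 \<le> i \<and> i \<le> rkS M a) \<zeta>)"

text \<open>Look-ahead automaton run (delta_M), with delta(p) = p for hole symbols.\<close>
fun la :: "('s, 'd, 'q, 'p) dtla \<Rightarrow> ('s, 'p) ilab tree \<Rightarrow> 'p" where
  "la M (Nd (ISym a) ts) = dl M a (map (la M) ts)"
| "la M (Nd (ILa p) ts) = p"

fun subst :: "('q \<Rightarrow> nat \<Rightarrow> ('d, 'q, 'p) olab tree option) \<Rightarrow> ('d, 'q) rlab tree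
               \<Rightarrow> ('d, 'q, 'p) olab tree option" where
  "subst f (Nd (RSym d) us) =
     (if (\<exists>u\<in>set us. subst f u = None) then None
      else Some (Nd (OSym d) (map (\<lambda>u. the (subst f u)) us)))"
| "subst f (Nd (RCall q i) us) = f q i"

lemma run_term_aux:
  fixes ts :: "'a tree list" and i :: nat
  assumes "Suc 0 \<le> i" "i \<le> length ts"
  shows "size (ts ! (i - Suc 0)) < Suc (size_list size ts)"
proof -
  have "ts ! (i - Suc 0) \<in> set ts" using assms by (intro nth_mem) simp
  then show ?thesis
    using size_list_estimation'[of _ ts "size (ts ! (i - Suc 0))" size] by fastforce
qed

text \<open>q_M (partial); q_M(p) = <q,p> on a look-ahead leaf.\<close>
function run :: "('s, 'd, 'q, 'p) dtla \<Rightarrow> 'q \<Rightarrow> ('s, 'p) ilab tree \<Rightarrow> ('d, 'q, 'p) olab tree option" where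
  "run M q (Nd (ILa p) ts) = Some (Nd (OSt q p) [])"
| "run M q (Nd (ISym a) ts) =
     (case rl M q a (map (la M) ts) of
        None \<Rightarrow> None
      | Some \<zeta> \<Rightarrow> subst (\<lambda>q' i. if 1 \<le> i \<and> i \<le> length ts then run M q' (ts ! (i - 1)) else None) \<zeta>)"
  by pat_completeness auto
termination
  by (relation "measure (\<lambda>(M, q, t). size t)") (auto intro: run_term_aux[simplified])

text \<open>M(t) = A_M(delta_M(t))[q(x_0) <- q_M(t)].\<close>
definition out :: "('s, 'd, 'q, 'p) dtla \<Rightarrow> ('s, 'p) ilab tree \<Rightarrow> ('d, 'q, 'p) olab tree option" where
  "out M t = subst (\<lambda>q i. if i = 0 then run M q t else None) (ax M (la M t))"

fun gr :: "('s, 'd, 'q, 'p) dtla \<Rightarrow> 's tree \<Rightarrow> bool" where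
  "gr M (Nd a ts) = (a \<in> Sig M \<and> length ts = rkS M a \<and> (\<forall>t\<in>set ts. gr M t))"

definition embed :: "'s tree \<Rightarrow> ('s, 'p) ilab tree" where
  "embed s = map_tree ISym s"

text \<open>Trees over Sigma plus bottom (None).\<close>
fun ctxw :: "('s, 'd, 'q, 'p) dtla \<Rightarrow> 's option tree \<Rightarrow> bool" where
  "ctxw M (Nd None ts) = (ts = [])"
| "ctxw M (Nd (Some a) ts) = (a \<in> Sig M \<and> length ts = rkS M a \<and> (\<forall>t\<in>set ts. ctxw M t))"

fun holes :: "'s option tree \<Rightarrow> nat" where
  "holes (Nd None ts) = 1"
| "holes (Nd (Some a) ts) = sum_list (map holes ts)"

definition is_ctx :: "('s, 'd, 'q, 'p) dtla \<Rightarrow> 's option tree \<Rightarrow> bool" where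
  "is_ctx M C \<longleftrightarrow> ctxw M C \<and> holes C = 1"

definition plug :: "'s option tree \<Rightarrow> 'p \<Rightarrow> ('s, 'p) ilab tree" where
  "plug C p = map_tree (\<lambda>x. case x of None \<Rightarrow> ILa p | Some a \<Rightarrow> ISym a) C"

definition MC :: "('s, 'd, 'q, 'p) dtla \<Rightarrow> 's option tree \<Rightarrow> 'p \<Rightarrow> ('d, 'q, 'p) olab tree option" where
  "MC M C p = out M (plug C p)"

definition total_dtla :: "('s, 'd, 'q, 'p) dtla \<Rightarrow> bool" where
  "total_dtla M \<longleftrightarrow> (\<forall>s. gr M s \<longrightarrow> out M (embed s) \<noteq> None)"

definition dtpla :: "('s, 'd, 'q, 'p) dtla \<Rightarrow> bool" where
  "dtpla M \<longleftrightarrow> wf_dtla M \<and> card (Ps M) \<ge> 2"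

definition la_reachable :: "('s, 'd, 'q, 'p) dtla \<Rightarrow> bool" where
  "la_reachable M \<longleftrightarrow> (\<forall>p\<in>Ps M. \<exists>s. gr M s \<and> la M (embed s) = p)"

text \<open>V_bot(glb T) for a nonempty finite set T of trees, following the node-wise definition.\<close>
definition Vbot_glb :: "('d, 'q, 'p) olab tree set \<Rightarrow> nat list set" where
  "Vbot_glb T = {v. (\<forall>t\<in>T. is_pos t v)
      \<and> (\<forall>u w. w \<noteq> [] \<and> u @ w = v \<longrightarrow> (\<forall>t\<in>T. \<forall>t'\<in>T. lab t u = lab t' u))
      \<and> ((\<exists>t\<in>T. \<exists>t'\<in>T. lab t v \<noteq> lab t' v) \<or> (\<forall>t\<in>T. lab t v = OBot))}"

definition diff :: "('s, 'd, 'q, 'p) dtla \<Rightarrow> ('d, 'q, 'p) olab tree set" where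
  "diff M = {subt t v | C p p' t t' v. is_ctx M C \<and> p \<in> Ps M \<and> p' \<in> Ps M \<and>
              MC M C p = Some t \<and> MC M C p' = Some t' \<and> v \<in> Vbot_glb {t, t'}}"

definition maxdiff :: "('s, 'd, 'q, 'p) dtla \<Rightarrow> nat" where
  "maxdiff M = Max (height ` diff M)"

text \<open>V_bot(pref(M,C)), defined when all M(C[p]) are defined.\<close>
definition Vpref :: "('s, 'd, 'q, 'p) dtla \<Rightarrow> 's option tree \<Rightarrow> nat list set" where
  "Vpref M C = {v. (\<forall>p\<in>Ps M. MC M C p \<noteq> None) \<and>
                   v \<in> Vbot_glb ((\<lambda>p. the (MC M C p)) ` Ps M)}"

text \<open>Difference tuples w.r.t. an enumeration (list) of P.\<close>
definition diftup :: "('s, 'd, 'q, 'p) dtla \<Rightarrow> 'p list \<Rightarrow> ('d, 'q, 'p) olab tree list set" where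
  "diftup M enum = {map (\<lambda>p. subt (the (MC M C p)) v) enum | C v. is_ctx M C \<and> v \<in> Vpref M C}"

end

theory Submission
  imports Defs
begin


fun wr :: "('s, 'd, 'q, 'p) dtla \<Rightarrow> ('d, 'q, 'p) olab tree \<Rightarrow> bool" where
  "wr M (Nd (OSym d) ts) = (length ts = rkD M d \<and> (\<forall>t\<in>set ts. wr M t))"
| "wr M (Nd (OSt q p) ts) = (ts = [])"
| "wr M (Nd OBot ts) = (ts = [])"

fun wfx :: "('s, 'd, 'q, 'p) dtla \<Rightarrow> ('s, 'p) ilab tree \<Rightarrow> bool" where
  "wfx M (Nd (ILa p) ts) = (p \<in> Ps M)"
| "wfx M (Nd (ISym a) ts) = (a \<in> Sig M \<and> length ts = rkS M a \<and> (\<forall>t\<in>set ts. wfx M t))"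

fun fill :: "'s option tree \<Rightarrow> 's tree \<Rightarrow> 's tree" where
  "fill (Nd None ts) s = s"
| "fill (Nd (Some a) ts) s = Nd a (map (\<lambda>t. fill t s) ts)"

lemma embed_Nd: "embed (Nd a ts) = Nd (ISym a) (map embed ts)"
  by (simp add: embed_def)

lemma plug_None: "plug (Nd None ts) p = Nd (ILa p) (map (\<lambda>t. plug t p) ts)"
  by (simp add: plug_def)

lemma plug_Some: "plug (Nd (Some a) ts) p = Nd (ISym a) (map (\<lambda>t. plug t p) ts)"
  by (simp add: plug_def)

lemma wf_dl: "wf_dtla M \<Longrightarrow> a \<in> Sig M \<Longrightarrow> length ps = rkS M a \<Longrightarrow> set ps \<subseteq> Ps M \<Longrightarrow> dl M a ps \<in> Ps M"
  unfolding wf_dtla_def by blast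

lemma wf_rl: "wf_dtla M \<Longrightarrow> q \<in> Qs M \<Longrightarrow> a \<in> Sig M \<Longrightarrow> length ps = rkS M a \<Longrightarrow> set ps \<subseteq> Ps M
   \<Longrightarrow> rl M q a ps = Some \<zeta> \<Longrightarrow> wf_rhs M (\<lambda>i. 1 \<le> i \<and> i \<le> rkS M a) \<zeta>"
  unfolding wf_dtla_def by simp

lemma wf_ax: "wf_dtla M \<Longrightarrow> p \<in> Ps M \<Longrightarrow> wf_rhs M (\<lambda>i. i = 0) (ax M p)"
  unfolding wf_dtla_def by blast

lemma la_Ps: "wf_dtla M \<Longrightarrow> wfx M x \<Longrightarrow> la M x \<in> Ps M"
proof (induction x rule: tree.induct)
  case (Nd a ts)
  show ?case
  proof (cases a)
    case (ISym b)
    have wa: "b \<in> Sig M" "length ts = rkS M b" "\<forall>t\<in>set ts. wfx M t" using Nd.prems ISym by auto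
    have "set (map (la M) ts) \<subseteq> Ps M" using Nd.IH Nd.prems(1) wa by auto
    then show ?thesis using wf_dl[OF Nd.prems(1) wa(1), of "map (la M) ts"] wa ISym by simp
  next
    case (ILa p)
    then show ?thesis using Nd.prems by simp
  qed
qed

lemma subst_wr:
  "wf_rhs M ok \<zeta> \<Longrightarrow> (\<And>q i t. q \<in> Qs M \<Longrightarrow> ok i \<Longrightarrow> f q i = Some t \<Longrightarrow> wr M t)
   \<Longrightarrow> subst f \<zeta> = Some t \<Longrightarrow> wr M t"
proof (induction \<zeta> arbitrary: t rule: tree.induct)
  case (Nd a us)
  show ?case
  proof (cases a)
    case (RSym d)
    with Nd.prems have nn: "\<forall>u\<in>set us. subst f u \<noteq> None"
      and t: "t = Nd (OSym d) (map (\<lambda>u. the (subst f u)) us)"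
      by (auto split: if_splits)
    have "\<forall>x\<in>set (map (\<lambda>u. the (subst f u)) us). wr M x"
    proof
      fix x assume "x \<in> set (map (\<lambda>u. the (subst f u)) us)"
      then obtain u where u: "u \<in> set us" "x = the (subst f u)" by auto
      with nn have "subst f u = Some x" by auto
      moreover have "wf_rhs M ok u" using Nd.prems(1) RSym u(1) by auto
      ultimately show "wr M x" using Nd.IH[OF u(1)] Nd.prems(2) by blast
    qed
    then show ?thesis using t Nd.prems(1) RSym by auto
  next
    case (RCall q i)
    then show ?thesis using Nd.prems by auto
  qed
qed

lemma subst_def:
  "(\<And>q i. f q i \<noteq> None \<Longrightarrow> g q i \<noteq> None) \<Longrightarrow> subst f \<zeta> \<noteq> None \<Longrightarrow> subst g \<zeta> \<noteq> None"
proof (induction \<zeta> rule: tree.induct)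
  case (Nd a us)
  then show ?case
    by (cases a) (auto split: if_splits)
qed

lemma run_wr: "wf_dtla M \<Longrightarrow> q \<in> Qs M \<Longrightarrow> wfx M x \<Longrightarrow> run M q x = Some t \<Longrightarrow> wr M t"
proof (induction M q x arbitrary: t rule: run.induct)
  case (1 M q p ts)
  then show ?case by auto
next
  case (2 M q a ts)
  obtain \<zeta> where z: "rl M q a (map (la M) ts) = Some \<zeta>"
    using "2.prems" by (auto split: option.splits)
  have wa: "a \<in> Sig M" "length ts = rkS M a" "\<forall>t\<in>set ts. wfx M t" using "2.prems" by auto
  have sp: "set (map (la M) ts) \<subseteq> Ps M" using wa la_Ps[OF "2.prems"(1)] by auto
  have wz: "wf_rhs M (\<lambda>i. 1 \<le> i \<and> i \<le> rkS M a) \<zeta>"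
    using wf_rl[OF "2.prems"(1,2) wa(1) _ sp z] wa(2) by simp
  show ?case
  proof (rule subst_wr[OF wz])
    fix q' i t'
    assume h: "q' \<in> Qs M" "1 \<le> i \<and> i \<le> rkS M a"
      "(if 1 \<le> i \<and> i \<le> length ts then run M q' (ts ! (i - 1)) else None) = Some t'"
    then have r: "run M q' (ts ! (i - 1)) = Some t'" using wa by auto
    have "ts ! (i - 1) \<in> set ts" using h wa by auto
    then show "wr M t'" using "2.IH"[OF z _ "2.prems"(1) h(1) _ r] h wa by auto
  next
    show "subst (\<lambda>q' i. if 1 \<le> i \<and> i \<le> length ts then run M q' (ts ! (i - 1)) else None) \<zeta> = Some t"
      using "2.prems" z by auto
  qed
qed

lemma wfx_plug: "ctxw M C \<Longrightarrow> p \<in> Ps M \<Longrightarrow> wfx M (plug C p)"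
proof (induction C rule: tree.induct)
  case (Nd a ts)
  then show ?case by (cases a) (auto simp: plug_None plug_Some)
qed

lemma MC_wr: "wf_dtla M \<Longrightarrow> ctxw M C \<Longrightarrow> p \<in> Ps M \<Longrightarrow> MC M C p = Some t \<Longrightarrow> wr M t"
  unfolding MC_def out_def
proof (rule subst_wr)
  assume a: "wf_dtla M" "ctxw M C" "p \<in> Ps M"
  have "wfx M (plug C p)" using wfx_plug[OF a(2,3)] .
  then have "la M (plug C p) \<in> Ps M" by (rule la_Ps[OF a(1)])
  then show "wf_rhs M (\<lambda>i. i = 0) (ax M (la M (plug C p)))" by (rule wf_ax[OF a(1)])
  fix q i t'
  assume "q \<in> Qs M" "i = 0" "(if i = 0 then run M q (plug C p) else None) = Some t'"
  then show "wr M t'" using run_wr[OF a(1) _ \<open>wfx M (plug C p)\<close>] by auto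
qed

lemma gr_fill: "ctxw M C \<Longrightarrow> gr M s \<Longrightarrow> gr M (fill C s)"
proof (induction C rule: tree.induct)
  case (Nd a ts)
  then show ?case by (cases a) auto
qed

lemma la_fill: "la M (embed s) = p \<Longrightarrow> la M (embed (fill C s)) = la M (plug C p)"
proof (induction C rule: tree.induct)
  case (Nd a ts)
  show ?case
  proof (cases a)
    case None
    then show ?thesis using Nd.prems by (simp add: plug_None)
  next
    case (Some b)
    have "\<forall>t\<in>set ts. la M (embed (fill t s)) = la M (plug t p)"
      using Nd.IH Nd.prems by blast
    then show ?thesis using Some by (simp add: plug_Some embed_Nd comp_def cong: map_cong)
  qed
qed

lemma run_fill:
  fixes M :: "('s, 'd, 'q, 'p) dtla" and s :: "'s tree"
  shows "la M (embed s) = p \<Longrightarrow> run M q (embed (fill C s)) \<noteq> None \<Longrightarrow> run M q (plug C p) \<noteq> None"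
proof (induction C arbitrary: q rule: tree.induct)
  case (Nd a ts)
  show ?case
  proof (cases a)
    case None
    then show ?thesis by (simp add: plug_None)
  next
    case (Some b)
    define ys where "ys = map (\<lambda>t. embed (fill t s) :: ('s, 'p) ilab tree) ts"
    define xs where "xs = map (\<lambda>t. plug t p) ts"
    have ey: "embed (fill (Nd a ts) s) = Nd (ISym b) ys" using Some by (simp add: ys_def embed_Nd comp_def)
    have ex: "plug (Nd a ts) p = Nd (ISym b) xs" using Some by (simp add: xs_def plug_Some)
    have lm: "map (la M) ys = map (la M) xs"
      using la_fill[OF Nd.prems(1)] by (simp add: ys_def xs_def)
    have ly: "length ys = length ts" and lx: "length xs = length ts" by (simp_all add: ys_def xs_def)
    have r1: "run M q (Nd (ISym b) ys) \<noteq> None" using Nd.prems(2) ey by simp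
    show ?thesis
    proof (cases "rl M q b (map (la M) xs)")
      case None
      then show ?thesis using r1 lm by simp
    next
      case (Some \<zeta>)
      have "subst (\<lambda>q' i. if 1 \<le> i \<and> i \<le> length ts then run M q' (ys ! (i - 1)) else None) \<zeta> \<noteq> None"
        using r1 Some lm ly by simp
      then have "subst (\<lambda>q' i. if 1 \<le> i \<and> i \<le> length ts then run M q' (xs ! (i - 1)) else None) \<zeta> \<noteq> None"
      proof (rule subst_def[rotated])
        fix q' i
        assume h: "(if 1 \<le> i \<and> i \<le> length ts then run M q' (ys ! (i - 1)) else None) \<noteq> None"
        then have i: "1 \<le> i \<and> i \<le> length ts" by (auto split: if_splits)
        then have mem: "ts ! (i - 1) \<in> set ts" by auto
        have il: "i - 1 < length ts" using i by linarith
        have yi: "ys ! (i - 1) = embed (fill (ts ! (i - 1)) s)" unfolding ys_def using nth_map[OF il] by simp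
        have xi: "xs ! (i - 1) = plug (ts ! (i - 1)) p" unfolding xs_def using nth_map[OF il] by simp
        have "run M q' (embed (fill (ts ! (i - 1)) s)) \<noteq> None" using h i unfolding yi by simp
        then have "run M q' (plug (ts ! (i - 1)) p) \<noteq> None" using Nd.IH[OF mem Nd.prems(1)] by blast
        then show "(if 1 \<le> i \<and> i \<le> length ts then run M q' (xs ! (i - 1)) else None) \<noteq> None"
          using i unfolding xi by simp
      qed
      then show ?thesis using Some ex lx by simp
    qed
  qed
qed

lemma out_fill: "la M (embed s) = p \<Longrightarrow> out M (embed (fill C s)) \<noteq> None \<Longrightarrow> out M (plug C p) \<noteq> None"
  unfolding out_def
proof -
  assume a: "la M (embed s) = p" "subst (\<lambda>q i. if i = 0 then run M q (embed (fill C s)) else None) (ax M (la M (embed (fill C s)))) \<noteq> None"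
  have "subst (\<lambda>q i. if i = 0 then run M q (embed (fill C s)) else None) (ax M (la M (plug C p))) \<noteq> None"
    using a la_fill[OF a(1)] by simp
  then show "subst (\<lambda>q i. if i = 0 then run M q (plug C p) else None) (ax M (la M (plug C p))) \<noteq> None"
  proof (rule subst_def[rotated])
    fix q i
    assume h: "(if i = 0 then run M q (embed (fill C s)) else None) \<noteq> None"
    then have "i = 0" "run M q (embed (fill C s)) \<noteq> None" by (auto split: if_splits)
    then show "(if i = 0 then run M q (plug C p) else None) \<noteq> None" using run_fill[OF a(1)] by simp
  qed
qed

lemma MC_defined:
  assumes "total_dtla M" "la_reachable M" "ctxw M C" "p \<in> Ps M"
  shows "MC M C p \<noteq> None"
proof -
  obtain s where s: "gr M s" "la M (embed s) = p" using assms(2,4) unfolding la_reachable_def by blast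
  have "out M (embed (fill C s)) \<noteq> None" using assms(1) gr_fill[OF assms(3) s(1)] unfolding total_dtla_def by blast
  then show ?thesis unfolding MC_def using out_fill[OF s(2)] by blast
qed



lemma is_pos_Nil[simp]: "is_pos t []" by (cases t) simp

lemma subt_append: "subt t (w @ u) = subt (subt t w) u"
proof (induction w arbitrary: t)
  case (Cons i w) then show ?case by (cases t) simp
qed simp

lemma is_pos_append: "is_pos t (w @ u) = (is_pos t w \<and> is_pos (subt t w) u)"
proof (induction w arbitrary: t)
  case (Cons i w) then show ?case by (cases t) auto
qed simp

lemma height_child: "i < length ts \<Longrightarrow> height (ts ! i) < height (Nd a ts)"
proof -
  assume "i < length ts"
  then have "Suc (height (ts ! i)) \<in> insert 0 (Suc ` set (map height ts))" by auto
  then have "Suc (height (ts ! i)) \<le> Max (insert 0 (Suc ` set (map height ts)))"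
    by (intro Max_ge) auto
  then show ?thesis by simp
qed

lemma height_subt: "is_pos t u \<Longrightarrow> height (subt t u) \<le> height t"
proof (induction u arbitrary: t)
  case (Cons i u)
  obtain a ts where t: "t = Nd a ts" by (cases t)
  with Cons.prems have "i < length ts" "is_pos (ts ! i) u" by auto
  then show ?case using Cons.IH height_child[of i ts a] t by fastforce
qed simp

lemma finite_subs: "finite {subt t u | u. is_pos t u}"
proof (induction t rule: tree.induct)
  case (Nd a ts)
  have "{subt (Nd a ts) u | u. is_pos (Nd a ts) u} \<subseteq>
        insert (Nd a ts) (\<Union>t\<in>set ts. {subt t u | u. is_pos t u})"
  proof
    fix x assume "x \<in> {subt (Nd a ts) u | u. is_pos (Nd a ts) u}"
    then obtain u where u: "x = subt (Nd a ts) u" "is_pos (Nd a ts) u" by blast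
    show "x \<in> insert (Nd a ts) (\<Union>t\<in>set ts. {subt t u | u. is_pos t u})"
    proof (cases u)
      case Nil then show ?thesis using u by simp
    next
      case (Cons i u')
      then have "i < length ts" "is_pos (ts ! i) u'" "x = subt (ts ! i) u'" using u by auto
      then show ?thesis by auto
    qed
  qed
  moreover have "finite (insert (Nd a ts) (\<Union>t\<in>set ts. {subt t u | u. is_pos t u}))"
    using Nd by auto
  ultimately show ?case by (rule finite_subset)
qed

lemma wr_subt: "wr M t \<Longrightarrow> is_pos t u \<Longrightarrow> wr M (subt t u)"
proof (induction u arbitrary: t)
  case (Cons i u)
  obtain a ts where t: "t = Nd a ts" by (cases t)
  with Cons.prems have i: "i < length ts" "is_pos (ts ! i) u" by auto
  have "wr M (ts ! i)" using Cons.prems(1) t i by (cases a) auto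
  then show ?case using Cons.IH i t by simp
qed simp

lemma wr_child:
  assumes "wr M s" "wr M s'" "is_pos s u" "is_pos s' u" "lab s u = lab s' u" "is_pos s (u @ [i])"
  shows "is_pos s' (u @ [i])"
proof -
  obtain a ts where a: "subt s u = Nd a ts" by (cases "subt s u")
  obtain a' ts' where a': "subt s' u = Nd a' ts'" by (cases "subt s' u")
  have aa: "a = a'" using assms(5) a a' by (simp add: lab_def)
  have w1: "wr M (Nd a ts)" using wr_subt[OF assms(1,3)] a by simp
  have w2: "wr M (Nd a ts')" using wr_subt[OF assms(2,4)] a' aa by simp
  have "length ts = length ts'" using w1 w2 by (cases a) auto
  moreover have "i < length ts" using assms(6) a by (simp add: is_pos_append)
  ultimately show ?thesis using assms(4) a' by (simp add: is_pos_append)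
qed

lemma Vbot_glb_iff:
  "v \<in> Vbot_glb T \<longleftrightarrow> (\<forall>t\<in>T. is_pos t v) \<and> (\<forall>u w. w \<noteq> [] \<and> u @ w = v \<longrightarrow> (\<forall>t\<in>T. \<forall>t'\<in>T. lab t u = lab t' u))
   \<and> ((\<exists>t\<in>T. \<exists>t'\<in>T. lab t v \<noteq> lab t' v) \<or> (\<forall>t\<in>T. lab t v = OBot))"
  unfolding Vbot_glb_def mem_Collect_eq by (rule refl)

lemma Vbot_glbI:
  "(\<forall>t\<in>T. is_pos t v) \<Longrightarrow> (\<forall>u w. w \<noteq> [] \<and> u @ w = v \<longrightarrow> (\<forall>t\<in>T. \<forall>t'\<in>T. lab t u = lab t' u))
   \<Longrightarrow> ((\<exists>t\<in>T. \<exists>t'\<in>T. lab t v \<noteq> lab t' v) \<or> (\<forall>t\<in>T. lab t v = OBot)) \<Longrightarrow> v \<in> Vbot_glb T"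
  unfolding Vbot_glb_iff by (intro conjI)

lemma Vbot_glbD:
  assumes "v \<in> Vbot_glb T"
  shows "\<forall>t\<in>T. is_pos t v" "\<forall>u w. w \<noteq> [] \<and> u @ w = v \<longrightarrow> (\<forall>t\<in>T. \<forall>t'\<in>T. lab t u = lab t' u)"
    "(\<exists>t\<in>T. \<exists>t'\<in>T. lab t v \<noteq> lab t' v) \<or> (\<forall>t\<in>T. lab t v = OBot)"
proof -
  have h: "(\<forall>t\<in>T. is_pos t v) \<and> (\<forall>u w. w \<noteq> [] \<and> u @ w = v \<longrightarrow> (\<forall>t\<in>T. \<forall>t'\<in>T. lab t u = lab t' u))
   \<and> ((\<exists>t\<in>T. \<exists>t'\<in>T. lab t v \<noteq> lab t' v) \<or> (\<forall>t\<in>T. lab t v = OBot))"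
    using assms unfolding Vbot_glb_iff .
  show "\<forall>t\<in>T. is_pos t v" using h by (rule conjunct1)
  show "\<forall>u w. w \<noteq> [] \<and> u @ w = v \<longrightarrow> (\<forall>t\<in>T. \<forall>t'\<in>T. lab t u = lab t' u)"
    using h[THEN conjunct2] by (rule conjunct1)
  show "(\<exists>t\<in>T. \<exists>t'\<in>T. lab t v \<noteq> lab t' v) \<or> (\<forall>t\<in>T. lab t v = OBot)"
    using h[THEN conjunct2] by (rule conjunct2)
qed

lemma pref_aux:
  assumes wrT: "\<forall>s\<in>T. wr M s" and t0: "t0 \<in> T"
  shows "is_pos t0 v \<Longrightarrow> (\<exists>w u. v = w @ u \<and> w \<in> Vbot_glb T) \<or>
     ((\<forall>s\<in>T. is_pos s v) \<and> (\<forall>u w. u @ w = v \<longrightarrow> (\<forall>s\<in>T. \<forall>s'\<in>T. lab s u = lab s' u)))"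
proof (induction v rule: rev_induct)
  case Nil
  have pos: "\<forall>s\<in>T. is_pos s []" by simp
  show ?case
  proof (cases "\<forall>s\<in>T. \<forall>s'\<in>T. lab s [] = lab s' []")
    case True
    have "\<forall>u w. u @ w = [] \<longrightarrow> (\<forall>s\<in>T. \<forall>s'\<in>T. lab s u = lab s' u)"
    proof (intro allI impI)
      fix u w assume "u @ w = ([] :: nat list)"
      then have u0: "u = []" by simp
      show "\<forall>s\<in>T. \<forall>s'\<in>T. lab s u = lab s' u" unfolding u0 by (rule True)
    qed
    then show ?thesis by (rule disjI2[OF conjI[OF pos]])
  next
    case False
    have "[] \<in> Vbot_glb T"
      by (rule Vbot_glbI[OF pos]) (use False in auto)
    then show ?thesis by (intro disjI1 exI[of _ "[]"]) simp
  qed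
next
  case (snoc i v)
  have pv: "is_pos t0 v" using snoc.prems by (simp add: is_pos_append)
  from snoc.IH[OF pv] show ?case
  proof
    assume "\<exists>w u. v = w @ u \<and> w \<in> Vbot_glb T"
    then obtain w u where "v = w @ u" "w \<in> Vbot_glb T" by blast
    then show ?thesis by (intro disjI1 exI[of _ w] exI[of _ "u @ [i]"]) simp
  next
    assume R: "(\<forall>s\<in>T. is_pos s v) \<and> (\<forall>u w. u @ w = v \<longrightarrow> (\<forall>s\<in>T. \<forall>s'\<in>T. lab s u = lab s' u))"
    have lv: "\<forall>s\<in>T. \<forall>s'\<in>T. lab s v = lab s' v" using R[THEN conjunct2, THEN spec[of _ v], THEN spec[of _ "[]"], THEN mp, OF append_Nil2] .
    have pos: "\<forall>s\<in>T. is_pos s (v @ [i])"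
    proof
      fix s assume s: "s \<in> T"
      show "is_pos s (v @ [i])"
      proof (rule wr_child[OF _ _ _ _ _ snoc.prems])
        show "wr M t0" using wrT t0 by (rule bspec)
        show "wr M s" using wrT s by (rule bspec)
        show "is_pos t0 v" using R[THEN conjunct1] t0 by (rule bspec)
        show "is_pos s v" using R[THEN conjunct1] s by (rule bspec)
        show "lab t0 v = lab s v" using lv[THEN bspec[OF _ t0], THEN bspec[OF _ s]] .
      qed
    qed
    have anc: "\<forall>u w. w \<noteq> [] \<and> u @ w = v @ [i] \<longrightarrow> (\<forall>s\<in>T. \<forall>s'\<in>T. lab s u = lab s' u)"
    proof (intro allI impI)
      fix u w assume h: "w \<noteq> [] \<and> u @ w = v @ [i]"
      from h have e: "u @ w = v @ [i]" by (rule conjunct2)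
      from h have ne: "w \<noteq> []" by (rule conjunct1)
      have "u @ butlast w = butlast (u @ w)" using ne by (simp add: butlast_append)
      also have "\<dots> = butlast (v @ [i])" by (simp only: e)
      also have "\<dots> = v" by simp
      finally have "u @ butlast w = v" .
      from R[THEN conjunct2, THEN spec[of _ u], THEN spec[of _ "butlast w"], THEN mp, OF this]
      show "\<forall>s\<in>T. \<forall>s'\<in>T. lab s u = lab s' u" .
    qed
    show ?thesis
    proof (cases "\<forall>s\<in>T. \<forall>s'\<in>T. lab s (v @ [i]) = lab s' (v @ [i])")
      case True
      have "\<forall>u w. u @ w = v @ [i] \<longrightarrow> (\<forall>s\<in>T. \<forall>s'\<in>T. lab s u = lab s' u)"
      proof (intro allI impI)
        fix u w assume h: "u @ w = v @ [i]"
        show "\<forall>s\<in>T. \<forall>s'\<in>T. lab s u = lab s' u"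
        proof (cases "w = []")
          case True
          then have uv: "u = v @ [i]" using h by simp
          show ?thesis unfolding uv by (rule \<open>\<forall>s\<in>T. \<forall>s'\<in>T. lab s (v @ [i]) = lab s' (v @ [i])\<close>)
        next
          case False
          then have "w \<noteq> [] \<and> u @ w = v @ [i]" using h by simp
          from anc[THEN spec[of _ u], THEN spec[of _ w], THEN mp, OF this] show ?thesis .
        qed
      qed
      then show ?thesis by (rule disjI2[OF conjI[OF pos]])
    next
      case False
      have "v @ [i] \<in> Vbot_glb T"
        by (rule Vbot_glbI[OF pos anc]) (use False in blast)
      then show ?thesis by (intro disjI1 exI[of _ "v @ [i]"] exI[of _ "[]"]) simp
    qed
  qed
qed

lemma pref_exists:
  assumes "\<forall>s\<in>T. wr M s" "t \<in> T" "t' \<in> T" "v \<in> Vbot_glb {t, t'}"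
  shows "\<exists>w u. v = w @ u \<and> w \<in> Vbot_glb T"
proof -
  note D = Vbot_glbD[OF assms(4)]
  have pv: "is_pos t v" using D(1) by simp
  have lv: "lab t v \<noteq> lab t' v \<or> (lab t v = OBot \<and> lab t' v = OBot)"
    using D(3) by auto
  have "(\<exists>w u. v = w @ u \<and> w \<in> Vbot_glb T) \<or>
     ((\<forall>s\<in>T. is_pos s v) \<and> (\<forall>u w. u @ w = v \<longrightarrow> (\<forall>s\<in>T. \<forall>s'\<in>T. lab s u = lab s' u)))"
    by (rule pref_aux[OF assms(1,2) pv])
  then show ?thesis
  proof
    assume "\<exists>w u. v = w @ u \<and> w \<in> Vbot_glb T"
    then show ?thesis .
  next
    assume R: "(\<forall>s\<in>T. is_pos s v) \<and> (\<forall>u w. u @ w = v \<longrightarrow> (\<forall>s\<in>T. \<forall>s'\<in>T. lab s u = lab s' u))"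
    have lv2: "\<forall>s\<in>T. \<forall>s'\<in>T. lab s v = lab s' v" using R[THEN conjunct2, THEN spec[of _ v], THEN spec[of _ "[]"], THEN mp, OF append_Nil2] .
    have ob: "\<forall>s\<in>T. lab s v = OBot"
    proof (cases "lab t v = lab t' v")
      case True
      then have o: "lab t v = OBot" using lv by simp
      show ?thesis
      proof
        fix s assume "s \<in> T"
        have "lab s v = lab t v" using lv2[THEN bspec[OF _ \<open>s \<in> T\<close>], THEN bspec[OF _ assms(2)]] .
        then show "lab s v = OBot" using o by simp
      qed
    next
      case False
      have "lab t v = lab t' v" using lv2[THEN bspec[OF _ assms(2)], THEN bspec[OF _ assms(3)]] .
      with False show ?thesis by contradiction
    qed
    have pos: "\<forall>s\<in>T. is_pos s v" using R by (rule conjunct1)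
    have anc: "\<forall>u w. w \<noteq> [] \<and> u @ w = v \<longrightarrow> (\<forall>s\<in>T. \<forall>s'\<in>T. lab s u = lab s' u)"
    proof (intro allI impI)
      fix u w assume "w \<noteq> [] \<and> u @ w = v"
      then have "u @ w = v" by (rule conjunct2)
      from R[THEN conjunct2, THEN spec[of _ u], THEN spec[of _ w], THEN mp, OF this]
      show "\<forall>s\<in>T. \<forall>s'\<in>T. lab s u = lab s' u" .
    qed
    have "v \<in> Vbot_glb T" by (rule Vbot_glbI[OF pos anc disjI2[OF ob]])
    then show ?thesis by (intro exI[of _ v] exI[of _ "[]"]) simp
  qed
qed

lemma sup_eq:
  fixes f :: "'a \<Rightarrow> nat"
  assumes "A \<subseteq> B" "\<forall>b\<in>B. \<exists>a\<in>A. f b \<le> f a"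
  shows "(SUP b\<in>B. enat (f b)) = (SUP a\<in>A. enat (f a))"
  by (rule antisym; rule SUP_mono) (use assms in auto)

lemma max_eq:
  fixes f :: "'a \<Rightarrow> nat"
  assumes "A \<subseteq> B" "\<forall>b\<in>B. \<exists>a\<in>A. f b \<le> f a" "finite B"
  shows "Max (f ` B) = Max (f ` A)"
proof (cases "A = {}")
  case True
  then have "B = {}" using assms(2) by auto
  then show ?thesis using True by simp
next
  case False
  have fA: "finite A" using assms(1,3) finite_subset by blast
  show ?thesis
  proof (rule antisym)
    show "Max (f ` B) \<le> Max (f ` A)"
    proof (subst Max_le_iff)
      show "finite (f ` B)" using assms(3) by simp
      show "f ` B \<noteq> {}" using False assms(1) by auto
      show "\<forall>a\<in>f ` B. a \<le> Max (f ` A)"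
        using assms(2) fA by (fastforce intro: le_trans[OF _ Max_ge])
    qed
    show "Max (f ` A) \<le> Max (f ` B)"
      using False assms by (intro Max_mono) auto
  qed
qed



theorem mainTheorem1:
  fixes M :: "('s, 'd, 'q, 'p) dtla" and enum :: "'p list"
  assumes "dtpla M" and "total_dtla M" and "la_reachable M"
    and "distinct enum" and "set enum = Ps M"
  shows "(SUP t \<in> diff M. enat (height t))
           = (SUP t \<in> {subt (the (MC M C p)) v | C p v. is_ctx M C \<and> p \<in> Ps M \<and> v \<in> Vpref M C}.
                enat (height t))
         \<and> (finite (diff M) \<longleftrightarrow> finite (diftup M enum))
         \<and> (finite (diff M) \<longrightarrow>
              maxdiff M = Max {height (tup ! i) | tup i. tup \<in> diftup M enum \<and> i < length tup})"
proof -
  have wf: "wf_dtla M" using assms(1) unfolding dtpla_def by blast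
  define T where "T C = (\<lambda>p. the (MC M C p)) ` Ps M" for C
  define S where "S = {subt (the (MC M C p)) v | C p v. is_ctx M C \<and> p \<in> Ps M \<and> v \<in> Vpref M C}"
  have Si: "subt (the (MC M C p)) v \<in> S" if "is_ctx M C" "p \<in> Ps M" "v \<in> Vpref M C" for C p v
    unfolding S_def mem_Collect_eq
    by (intro exI[of _ C] exI[of _ p] exI[of _ v]) (simp add: that)
  have Se: "\<exists>C p v. x = subt (the (MC M C p)) v \<and> is_ctx M C \<and> p \<in> Ps M \<and> v \<in> Vpref M C" if "x \<in> S" for x
    using that unfolding S_def mem_Collect_eq .
  have Di: "subt t v \<in> diff M" if "is_ctx M C" "p \<in> Ps M" "p' \<in> Ps M" "MC M C p = Some t"
      "MC M C p' = Some t'" "v \<in> Vbot_glb {t, t'}" for C p p' t t' v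
    unfolding diff_def mem_Collect_eq
    by (intro exI[of _ C] exI[of _ p] exI[of _ p'] exI[of _ t] exI[of _ t'] exI[of _ v]) (simp add: that)
  have ctxw: "ctxw M C" if "is_ctx M C" for C using that by (simp add: is_ctx_def)
  have def: "MC M C p \<noteq> None" if c: "is_ctx M C" and p: "p \<in> Ps M" for C p
    using MC_defined[OF assms(2,3) ctxw[OF c] p] .
  have wrT: "\<forall>s\<in>T C. wr M s" if c: "is_ctx M C" for C
  proof
    fix s assume "s \<in> T C"
    then obtain p where p: "p \<in> Ps M" "s = the (MC M C p)" unfolding T_def by blast
    then have "MC M C p = Some s" using def[OF c p(1)] by auto
    then show "wr M s" using MC_wr[OF wf ctxw[OF c] p(1)] by blast
  qed
  have Vp: "Vpref M C = Vbot_glb (T C)" if c: "is_ctx M C" for C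
  proof -
    have "\<forall>p\<in>Ps M. MC M C p \<noteq> None" using def[OF c] by blast
    then show ?thesis unfolding Vpref_def T_def by simp
  qed
  have SD: "S \<subseteq> diff M"
  proof
    fix x assume "x \<in> S"
    then obtain C p v where x: "x = subt (the (MC M C p)) v" "is_ctx M C" "p \<in> Ps M" "v \<in> Vpref M C"
      using Se by blast
    obtain t where t: "MC M C p = Some t" using def[OF x(2,3)] by blast
    have xt: "x = subt t v" using x(1) t by simp
    have v: "v \<in> Vbot_glb (T C)" using Vp[OF x(2)] x(4) by simp
    have tT: "t \<in> T C" unfolding T_def by (rule image_eqI[of _ _ p]) (simp_all add: t x(3))
    note posall = Vbot_glbD(1)[OF v] and anc = Vbot_glbD(2)[OF v] and lbl = Vbot_glbD(3)[OF v]
    from lbl show "x \<in> diff M"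
    proof
      assume "\<exists>s\<in>T C. \<exists>s'\<in>T C. lab s v \<noteq> lab s' v"
      then obtain s s' where ss: "s \<in> T C" "s' \<in> T C" "lab s v \<noteq> lab s' v" by blast
      have "\<exists>t'\<in>T C. lab t v \<noteq> lab t' v"
      proof (cases "lab t v = lab s v")
        case True then show ?thesis using ss by auto
      next
        case False then show ?thesis using ss by auto
      qed
      then obtain t' where t'T: "t' \<in> T C" and d: "lab t v \<noteq> lab t' v" by blast
      then obtain p' where p': "p' \<in> Ps M" "t' = the (MC M C p')" unfolding T_def by blast
      then have t'': "MC M C p' = Some t'" using def[OF x(2) p'(1)] by auto
      have "v \<in> Vbot_glb {t, t'}"
      proof (rule Vbot_glbI)
        show "\<forall>ta\<in>{t, t'}. is_pos ta v" using posall tT t'T by blast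
        show "\<forall>u w. w \<noteq> [] \<and> u @ w = v \<longrightarrow> (\<forall>ta\<in>{t, t'}. \<forall>t'a\<in>{t, t'}. lab ta u = lab t'a u)"
        proof (intro allI impI)
          fix u w assume uw: "w \<noteq> [] \<and> u @ w = v"
          have e: "lab t u = lab t' u"
            using anc[THEN spec[of _ u], THEN spec[of _ w], THEN mp, OF uw, THEN bspec[OF _ tT], THEN bspec[OF _ t'T]] .
          show "\<forall>ta\<in>{t, t'}. \<forall>t'a\<in>{t, t'}. lab ta u = lab t'a u" using e by simp
        qed
        show "(\<exists>ta\<in>{t, t'}. \<exists>t'a\<in>{t, t'}. lab ta v \<noteq> lab t'a v) \<or> (\<forall>ta\<in>{t, t'}. lab ta v = OBot)"
          using d by blast
      qed
      then show ?thesis unfolding xt by (rule Di[OF x(2,3) p'(1) t t''])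
    next
      assume ob: "\<forall>s\<in>T C. lab s v = OBot"
      have "v \<in> Vbot_glb {t, t}"
      proof (rule Vbot_glbI)
        show "\<forall>ta\<in>{t, t}. is_pos ta v" using posall tT by blast
        show "\<forall>u w. w \<noteq> [] \<and> u @ w = v \<longrightarrow> (\<forall>ta\<in>{t, t}. \<forall>t'a\<in>{t, t}. lab ta u = lab t'a u)"
          by blast
        show "(\<exists>ta\<in>{t, t}. \<exists>t'a\<in>{t, t}. lab ta v \<noteq> lab t'a v) \<or> (\<forall>ta\<in>{t, t}. lab ta v = OBot)"
          using ob tT by blast
      qed
      then show ?thesis unfolding xt by (rule Di[OF x(2,3) x(3) t t])
    qed
  qed
  have DS: "\<exists>y\<in>S. \<exists>u. x = subt y u \<and> is_pos y u" if "x \<in> diff M" for x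
  proof -
    from that obtain C p p' t t' v where h: "x = subt t v" "is_ctx M C" "p \<in> Ps M" "p' \<in> Ps M"
      "MC M C p = Some t" "MC M C p' = Some t'" "v \<in> Vbot_glb {t, t'}"
      unfolding diff_def mem_Collect_eq by blast
    have tT: "t \<in> T C" "t' \<in> T C" unfolding T_def
      by (rule image_eqI[of _ _ p], simp_all add: h(3,5)) (rule image_eqI[of _ _ p'], simp_all add: h(4,6))
    obtain w u where wu: "v = w @ u" "w \<in> Vbot_glb (T C)"
      using pref_exists[OF wrT[OF h(2)] tT h(7)] by blast
    have e: "subt t w = subt (the (MC M C p)) w" using h(5) by simp
    have "w \<in> Vpref M C" using Vp[OF h(2)] wu(2) by simp
    then have yS: "subt t w \<in> S" unfolding e by (rule Si[OF h(2,3)])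
    have "is_pos t v" using Vbot_glbD(1)[OF h(7)] by simp
    then have "is_pos (subt t w) u" using wu(1) by (simp add: is_pos_append)
    moreover have "x = subt (subt t w) u" using h(1) wu(1) by (simp add: subt_append)
    ultimately show ?thesis using yS by blast
  qed
  have DSh: "\<forall>x\<in>diff M. \<exists>y\<in>S. height x \<le> height y"
  proof
    fix x assume "x \<in> diff M"
    then obtain y u where yu: "y \<in> S" "x = subt y u" "is_pos y u" using DS by blast
    have hx: "height x \<le> height y" using yu(2) height_subt[OF yu(3)] by simp
    show "\<exists>y\<in>S. height x \<le> height y"
    proof (rule bexI[where x=y])
      show "height x \<le> height y" by (rule hx)
      show "y \<in> S" by (rule yu(1))
    qed
  qed
  have part1: "(SUP t \<in> diff M. enat (height t)) = (SUP t \<in> S. enat (height t))"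
    by (rule sup_eq[OF SD DSh])
  have tupE: "\<exists>C v. tup = map (\<lambda>p. subt (the (MC M C p)) v) enum \<and> is_ctx M C \<and> v \<in> Vpref M C"
    if "tup \<in> diftup M enum" for tup
    using that unfolding diftup_def mem_Collect_eq .
  have tupS: "set tup \<subseteq> S \<and> length tup = length enum" if "tup \<in> diftup M enum" for tup
  proof -
    from tupE[OF that] obtain C v where tv: "tup = map (\<lambda>p. subt (the (MC M C p)) v) enum" "is_ctx M C" "v \<in> Vpref M C"
      by blast
    have "set tup \<subseteq> S"
    proof
      fix y assume "y \<in> set tup"
      then obtain p where "p \<in> set enum" "y = subt (the (MC M C p)) v" using tv(1) by auto
      then show "y \<in> S" using Si[OF tv(2) _ tv(3)] assms(5) by simp
    qed
    then show ?thesis using tv(1) by simp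
  qed
  have Stup: "S \<subseteq> \<Union> (set ` diftup M enum)"
  proof
    fix y assume "y \<in> S"
    then obtain C p v where y: "y = subt (the (MC M C p)) v" "is_ctx M C" "p \<in> Ps M" "v \<in> Vpref M C"
      using Se by blast
    have "map (\<lambda>p. subt (the (MC M C p)) v) enum \<in> diftup M enum"
      unfolding diftup_def mem_Collect_eq using y(2,4) by blast
    moreover have "y \<in> set (map (\<lambda>p. subt (the (MC M C p)) v) enum)" using y(1,3) assms(5) by auto
    ultimately show "y \<in> \<Union> (set ` diftup M enum)" by blast
  qed
  have part2: "finite (diff M) \<longleftrightarrow> finite (diftup M enum)"
  proof
    assume "finite (diff M)"
    then have fS: "finite S" using SD finite_subset by blast
    have "diftup M enum \<subseteq> {xs. set xs \<subseteq> S \<and> length xs = length enum}"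
      using tupS by blast
    then show "finite (diftup M enum)" using finite_lists_length_eq[OF fS] finite_subset by blast
  next
    assume f: "finite (diftup M enum)"
    have "finite (\<Union> (set ` diftup M enum))" using f by simp
    then have fS: "finite S" using Stup by (rule finite_subset[rotated])
    have "diff M \<subseteq> (\<Union>y\<in>S. {subt y u | u. is_pos y u})"
    proof
      fix x assume "x \<in> diff M"
      then obtain y u where "y \<in> S" "x = subt y u" "is_pos y u" using DS by blast
      then show "x \<in> (\<Union>y\<in>S. {subt y u | u. is_pos y u})" by blast
    qed
    moreover have "finite (\<Union>y\<in>S. {subt y u | u. is_pos y u})" by (intro finite_UN_I fS finite_subs)
    ultimately show "finite (diff M)" using finite_subset by blast
  qed
  have Heq: "{height (tup ! i) | tup i. tup \<in> diftup M enum \<and> i < length tup} = height ` S"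
  proof
    show "{height (tup ! i) | tup i. tup \<in> diftup M enum \<and> i < length tup} \<subseteq> height ` S"
    proof
      fix h assume "h \<in> {height (tup ! i) | tup i. tup \<in> diftup M enum \<and> i < length tup}"
      then obtain tup i where ti: "h = height (tup ! i)" "tup \<in> diftup M enum" "i < length tup" by blast
      have "tup ! i \<in> S" using tupS[OF ti(2)] nth_mem[OF ti(3)] by blast
      then show "h \<in> height ` S" unfolding ti(1) by (rule imageI)
    qed
    show "height ` S \<subseteq> {height (tup ! i) | tup i. tup \<in> diftup M enum \<and> i < length tup}"
    proof
      fix h assume "h \<in> height ` S"
      then obtain y where y: "y \<in> S" "h = height y" by blast
      then obtain tup where tup: "tup \<in> diftup M enum" "y \<in> set tup" using Stup by blast
      then obtain i where i: "i < length tup" "tup ! i = y" using tup(2) unfolding in_set_conv_nth by blast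
      show "h \<in> {height (tup ! i) | tup i. tup \<in> diftup M enum \<and> i < length tup}"
        unfolding mem_Collect_eq by (intro exI[of _ tup] exI[of _ i]) (simp add: i tup(1) y(2))
    qed
  qed
  have part3: "finite (diff M) \<longrightarrow>
              maxdiff M = Max {height (tup ! i) | tup i. tup \<in> diftup M enum \<and> i < length tup}"
  proof
    assume "finite (diff M)"
    then have "Max (height ` diff M) = Max (height ` S)" by (rule max_eq[OF SD DSh])
    then show "maxdiff M = Max {height (tup ! i) | tup i. tup \<in> diftup M enum \<and> i < length tup}"
      unfolding maxdiff_def Heq .
  qed
  have part1': "(SUP t \<in> diff M. enat (height t))
           = (SUP t \<in> {subt (the (MC M C p)) v | C p v. is_ctx M C \<and> p \<in> Ps M \<and> v \<in> Vpref M C}.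
                enat (height t))"
    using part1 unfolding S_def .
  show ?thesis by (rule conjI[OF part1' conjI[OF part2 part3]])
qed

end
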